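(* Let $(a_k)_{k\ge 0}$ be a sequence of positive reals such that $a_{k+1}/a_k$ is strictly decreasing in $k$ and tends to $0$. Let $F(t)=\sum_{k\ge0}a_kt^k$ (an entire function) and consider the power series family of distributions $f(k;t)=a_kt^k/F(t)$, $k\ge 0$, with parameter $t\ge 0$. Let $\mu(t)=\sum_k k f(k;t)$ be the mean, $t_0:=0$ and $t_k:=a_{k-1}/a_k$ for $k\ge1$; let $m_+(t)$ be the leading mode of $f(\cdot;t)$, and for $k\ge0$ let $\ell(k)$ be the unique solution $t\ge0$ of $\mu(t)=k$. Then the family is cross modal if and only if, for every $t\ge 0$ such that $\mu(t)$ is an integer, $\mu(t)$ is a mode of $f(\cdot;t)$. Moreover this condition is equivalent to each of the following: (i) $t_k\le \ell(k)\le t_{k+1}$ for all $k\ge1$; (ii) $k-1\le \mu(t_k)\le k$ for all $k\ge1$; (iii) $\sup_{t\ge0}|\mu(t)-m_+(t)|\le 1$.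
   Context: A mode of a probability function $g$ on $\{0,1,2,\dots\}$ is any $k$ with $g(k)=\max_j g(j)$. The leading mode $m_+$ of a log-concave probability function $g$ (extended by $g(-1)=0$) is the unique integer $k$ with $g(k-1)\le g(k)>g(k+1)$. The mean $\mu(t)$ is continuous and strictly increasing from $\mu(0)=0$ to $\infty$, so $\ell(k)$ is well defined. The family $\{f(\cdot;t):t\ge0\}$ is called cross modal if for every $k\ge0$ the likelihood $t\mapsto f(k;t)$ attains its maximum on $[0,\infty)$ and for every maximiser $t_0$ of it, $k$ is a mode of $f(\cdot;t_0)$. *)

theory Defs
  imports "HOL-Analysis.Analysis"
begin

definition psF :: "(nat \<Rightarrow> real) \<Rightarrow> real \<Rightarrow> real" where
  "psF a t = (\<Sum>k. a k * t ^ k)"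

definition psf :: "(nat \<Rightarrow> real) \<Rightarrow> nat \<Rightarrow> real \<Rightarrow> real" where
  "psf a k t = a k * t ^ k / psF a t"

definition psmean :: "(nat \<Rightarrow> real) \<Rightarrow> real \<Rightarrow> real" where
  "psmean a t = (\<Sum>k. real k * psf a k t)"

definition tpt :: "(nat \<Rightarrow> real) \<Rightarrow> nat \<Rightarrow> real" where
  "tpt a k = (if k = 0 then 0 else a (k - 1) / a k)"

definition is_mode :: "(nat \<Rightarrow> real) \<Rightarrow> nat \<Rightarrow> bool" where
  "is_mode g k \<longleftrightarrow> (\<forall>j. g j \<le> g k)"

definition leading_mode :: "(nat \<Rightarrow> real) \<Rightarrow> nat" where
  "leading_mode g = (THE k. (if k = 0 then 0 else g (k - 1)) \<le> g k \<and> g k > g (k + 1))"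

definition ell :: "(nat \<Rightarrow> real) \<Rightarrow> nat \<Rightarrow> real" where
  "ell a k = (THE t. t \<ge> 0 \<and> psmean a t = real k)"

definition cross_modal :: "(nat \<Rightarrow> real) \<Rightarrow> bool" where
  "cross_modal a \<longleftrightarrow>
     (\<forall>k. (\<exists>t0\<ge>0. \<forall>t\<ge>0. psf a k t \<le> psf a k t0) \<and>
          (\<forall>t0\<ge>0. (\<forall>t\<ge>0. psf a k t \<le> psf a k t0) \<longrightarrow> is_mode (\<lambda>j. psf a j t0) k))"

end

theory Submission
  imports Defs
begin

lemma ps_deriv:
  fixes c :: "nat \<Rightarrow> real"
  assumes S: "\<And>y. summable (\<lambda>n. c n * y^n)"
  shows "(\<lambda>n. (real n * c n) * x^n) sums (x * (\<Sum>n. diffs c n * x^n))"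
proof -
  have "summable (\<lambda>n. diffs c n * x^n)" by (rule termdiff_converges_all[OF S])
  hence "(\<lambda>n. x * (diffs c n * x^n)) sums (x * (\<Sum>n. diffs c n * x^n))"
    by (intro sums_mult summable_sums)
  moreover have "(\<lambda>n. x * (diffs c n * x^n)) = (\<lambda>n. (\<lambda>n. (real n * c n) * x^n) (Suc n))"
    by (auto simp: diffs_def)
  ultimately have "(\<lambda>n. (\<lambda>n. (real n * c n) * x^n) (Suc n)) sums (x * (\<Sum>n. diffs c n * x^n))"
    by simp
  thus ?thesis by (subst (asm) sums_Suc_iff) simp
qed

locale psd =
  fixes a :: "nat \<Rightarrow> real"
  assumes pos: "\<And>k. a k > 0"
    and ratio_dec: "\<And>k. a (Suc (Suc k)) / a (Suc k) < a (Suc k) / a k"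
    and ratio_lim: "(\<lambda>k. a (Suc k) / a k) \<longlonglongrightarrow> 0"
begin

lemma summ_a: "summable (\<lambda>n. a n * x^n)"
proof -
  have "(\<lambda>n. a (Suc n) / a n * \<bar>x\<bar>) \<longlonglongrightarrow> 0 * \<bar>x\<bar>"
    by (intro tendsto_mult ratio_lim tendsto_const)
  hence "eventually (\<lambda>n. a (Suc n) / a n * \<bar>x\<bar> < 1/2) sequentially"
    by (intro order_tendstoD(2)) auto
  then obtain N where N: "\<And>n. n \<ge> N \<Longrightarrow> a (Suc n) / a n * \<bar>x\<bar> < 1/2"
    by (auto simp: eventually_sequentially)
  show ?thesis
  proof (rule summable_ratio_test[of "1/2" N])
    fix n assume "n \<ge> N"
    have an: "a n > 0" "a (Suc n) > 0" using pos by auto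
    have "norm (a (Suc n) * x ^ Suc n) = (a (Suc n) / a n * \<bar>x\<bar>) * (a n * \<bar>x\<bar>^n)"
      using an by (simp add: abs_mult power_abs)
    also have "\<dots> \<le> 1/2 * (a n * \<bar>x\<bar>^n)"
      using N[OF \<open>n \<ge> N\<close>] an by (intro mult_right_mono) auto
    also have "\<dots> = 1/2 * norm (a n * x^n)" using an by (simp add: abs_mult power_abs)
    finally show "norm (a (Suc n) * x ^ Suc n) \<le> 1/2 * norm (a n * x^n)" .
  qed simp
qed

definition "b1 = (\<lambda>n. real n * a n)"
definition "b2 = (\<lambda>n. real n * b1 n)"
definition "Gf x = (\<Sum>n. b1 n * x^n)"
definition "Hf x = (\<Sum>n. b2 n * x^n)"
definition "Fd x = (\<Sum>n. diffs a n * x^n)"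
definition "Gd x = (\<Sum>n. diffs b1 n * x^n)"

lemma sums_G: "(\<lambda>n. b1 n * x^n) sums (x * Fd x)"
  unfolding b1_def Fd_def by (rule ps_deriv[OF summ_a])

lemma summ_b1: "summable (\<lambda>n. b1 n * x^n)" using sums_G by (rule sums_summable)
lemma G_eq: "Gf x = x * Fd x" unfolding Gf_def using sums_G by (rule sums_unique[symmetric])

lemma sums_H: "(\<lambda>n. b2 n * x^n) sums (x * Gd x)"
  unfolding b2_def Gd_def by (rule ps_deriv[OF summ_b1])

lemma summ_b2: "summable (\<lambda>n. b2 n * x^n)" using sums_H by (rule sums_summable)
lemma H_eq: "Hf x = x * Gd x" unfolding Hf_def using sums_H by (rule sums_unique[symmetric])

lemma F_deriv: "(psF a has_real_derivative Fd x) (at x)"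
  unfolding psF_def[abs_def] Fd_def by (rule termdiffs_strong_converges_everywhere[OF summ_a])

lemma G_deriv: "(Gf has_real_derivative Gd x) (at x)"
  unfolding Gf_def[abs_def] Gd_def by (rule termdiffs_strong_converges_everywhere[OF summ_b1])

lemma F_ge: assumes "t \<ge> 0" shows "psF a t \<ge> a 0 + a 1 * t"
proof -
  have "(\<Sum>n\<in>{0,1}. a n * t^n) \<le> (\<Sum>n. a n * t^n)"
    using assms pos by (intro sum_le_suminf summ_a) (auto intro!: mult_nonneg_nonneg simp: less_imp_le[OF pos])
  thus ?thesis by (simp add: psF_def)
qed

lemma F_pos: "t \<ge> 0 \<Longrightarrow> psF a t > 0"
  using F_ge[of t] pos[of 0] pos[of 1] by (smt (verit) mult_nonneg_nonneg)

lemma F_zero: "psF a 0 = a 0" unfolding psF_def by (rule powser_zero)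

lemma mean_eq: "psmean a t = Gf t / psF a t"
proof -
  have "psmean a t = (\<Sum>k. b1 k * t^k / psF a t)"
    unfolding psmean_def psf_def b1_def by (simp add: mult.assoc)
  also have "\<dots> = Gf t / psF a t" unfolding Gf_def by (rule suminf_divide[OF summ_b1])
  finally show ?thesis .
qed

lemma G_nonneg: "t \<ge> 0 \<Longrightarrow> Gf t \<ge> 0"
  unfolding Gf_def b1_def using pos by (intro suminf_nonneg summ_b1[unfolded b1_def]) (auto intro!: mult_nonneg_nonneg simp: less_imp_le[OF pos])

lemma mean_nonneg: "t \<ge> 0 \<Longrightarrow> psmean a t \<ge> 0"
  using G_nonneg F_pos by (simp add: mean_eq less_imp_le)

lemma mean_zero: "psmean a 0 = 0"
  by (simp add: mean_eq Gf_def b1_def)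


lemma var_pos: assumes "t > 0" shows "Hf t * psF a t - Gf t * Gf t > 0"
proof -
  define F where "F = psF a t"
  define m where "m = Gf t / F"
  have Fp: "F > 0" using F_pos assms by (simp add: F_def)
  have sH: "(\<lambda>n. b2 n * t^n) sums Hf t" unfolding Hf_def by (rule summable_sums[OF summ_b2])
  have sG: "(\<lambda>n. b1 n * t^n) sums Gf t" unfolding Gf_def by (rule summable_sums[OF summ_b1])
  have sF: "(\<lambda>n. a n * t^n) sums F" unfolding F_def psF_def by (rule summable_sums[OF summ_a])
  have s0: "(\<lambda>n. b2 n * t^n - 2*m*(b1 n * t^n) + m^2 * (a n * t^n)) sums (Hf t - 2*m*Gf t + m^2 * F)"
    by (intro sums_add sums_diff sums_mult sH sG sF)
  have eq: "\<And>n. b2 n * t^n - 2*m*(b1 n * t^n) + m^2 * (a n * t^n) = a n * t^n * (real n - m)^2"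
    by (simp add: b2_def b1_def power2_eq_square algebra_simps)
  have s: "(\<lambda>n. a n * t^n * (real n - m)^2) sums (Hf t - 2*m*Gf t + m^2 * F)"
    using s0 unfolding eq .
  have "(\<Sum>n\<in>{0,1}. a n * t^n * (real n - m)^2) \<le> (\<Sum>n. a n * t^n * (real n - m)^2)"
    using assms by (intro sum_le_suminf sums_summable[OF s]) (auto intro!: mult_nonneg_nonneg simp: less_imp_le[OF pos])
  also have "\<dots> = Hf t - 2*m*Gf t + m^2 * F" using s by (rule sums_unique[symmetric])
  finally have le: "a 0 * m^2 + a 1 * t * (1 - m)^2 \<le> Hf t - 2*m*Gf t + m^2 * F" by simp
  have "a 0 * m^2 + a 1 * t * (1 - m)^2 > 0"
  proof (cases "m = 0")
    case True thus ?thesis using pos[of 1] assms by simp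
  next
    case False
    have "a 0 * m^2 > 0" using pos[of 0] False by simp
    moreover have "a 1 * t * (1 - m)^2 \<ge> 0" using pos[of 1] assms by simp
    ultimately show ?thesis by linarith
  qed
  hence "Hf t - 2*m*Gf t + m^2 * F > 0" using le by linarith
  hence "F * (Hf t - 2*m*Gf t + m^2 * F) > 0" using Fp by simp
  also have "F * (Hf t - 2*m*Gf t + m^2 * F) = Hf t * F - Gf t * Gf t"
    using Fp by (simp add: m_def power2_eq_square field_simps)
  finally show ?thesis by (simp add: F_def)
qed

lemma mean_fun: "psmean a = (\<lambda>t. Gf t / psF a t)"
  using mean_eq by auto

lemma mean_deriv: assumes "t \<ge> 0"
  shows "(psmean a has_real_derivative (Gd t * psF a t - Gf t * Fd t) / (psF a t * psF a t)) (at t)"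
  unfolding mean_fun using F_pos[OF assms]
  by (intro DERIV_divide G_deriv F_deriv) auto

lemma mean_deriv_pos: assumes "t > 0"
  shows "(Gd t * psF a t - Gf t * Fd t) / (psF a t * psF a t) > 0"
proof -
  have "t * (Gd t * psF a t - Gf t * Fd t) = Hf t * psF a t - Gf t * Gf t"
    by (simp add: H_eq G_eq algebra_simps)
  hence "t * (Gd t * psF a t - Gf t * Fd t) > 0" using var_pos[OF assms] by simp
  hence "Gd t * psF a t - Gf t * Fd t > 0" using assms by (simp add: zero_less_mult_iff)
  moreover have "psF a t * psF a t > 0" using F_pos[of t] assms by simp
  ultimately show ?thesis by simp
qed

lemma mean_cont: "continuous_on {0..} (psmean a)"
  by (intro continuous_at_imp_continuous_on ballI DERIV_isCont[OF mean_deriv]) auto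

lemma mean_less: assumes "0 \<le> s" "s < t" shows "psmean a s < psmean a t"
proof (rule DERIV_pos_imp_increasing_open[OF assms(2)])
  fix x assume "s < x" "x < t"
  thus "\<exists>y. DERIV (psmean a) x :> y \<and> y > 0" using assms
    using mean_deriv[of x] mean_deriv_pos[of x] by auto
next
  show "continuous_on {s..t} (psmean a)"
    by (rule continuous_on_subset[OF mean_cont]) (use assms in auto)
qed

lemma mean_less_iff: "0 \<le> s \<Longrightarrow> 0 \<le> t \<Longrightarrow> psmean a s < psmean a t \<longleftrightarrow> s < t"
  by (metis mean_less not_less_iff_gr_or_eq order_less_asym)

lemma mean_le_iff: "0 \<le> s \<Longrightarrow> 0 \<le> t \<Longrightarrow> psmean a s \<le> psmean a t \<longleftrightarrow> s \<le> t"
  by (meson mean_less_iff not_le)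

lemma mean_unbounded: "\<exists>t\<ge>0. psmean a t \<ge> real k"
proof -
  define N where "N = Suc k"
  define A where "A = (\<Sum>n<N. a n)"
  define t where "t = max 1 (real N * A / a N)"
  define F where "F = psF a t"
  have t1: "t \<ge> 1" by (simp add: t_def)
  have Fp: "F > 0" using F_pos t1 by (simp add: F_def)
  have sG: "(\<lambda>n. b1 n * t^n) sums Gf t" unfolding Gf_def by (rule summable_sums[OF summ_b1])
  have sF: "(\<lambda>n. a n * t^n) sums F" unfolding F_def psF_def by (rule summable_sums[OF summ_a])
  have s: "(\<lambda>n. b1 n * t^n - real N * (a n * t^n)) sums (Gf t - real N * F)"
    by (intro sums_diff sums_mult sG sF)
  have "(\<Sum>n<N. b1 n * t^n - real N * (a n * t^n)) \<le> (\<Sum>n. b1 n * t^n - real N * (a n * t^n))"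
  proof (intro sum_le_suminf sums_summable[OF s])
    fix n assume "n \<in> - {..<N}"
    hence "real n \<ge> real N" by simp
    hence "(real n - real N) * (a n * t^n) \<ge> 0" using t1 pos[of n] by simp
    thus "0 \<le> b1 n * t^n - real N * (a n * t^n)" by (simp add: b1_def algebra_simps)
  qed simp
  also have "\<dots> = Gf t - real N * F" using s by (rule sums_unique[symmetric])
  finally have G1: "(\<Sum>n<N. b1 n * t^n - real N * (a n * t^n)) \<le> Gf t - real N * F" .
  have "(\<Sum>n<N. - (real N * (a n * t^k))) \<le> (\<Sum>n<N. b1 n * t^n - real N * (a n * t^n))"
  proof (rule sum_mono)
    fix n assume "n \<in> {..<N}"
    hence "n \<le> k" by (simp add: N_def)
    hence "t^n \<le> t^k" using t1 by (simp add: power_increasing)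
    hence "a n * t^n \<le> a n * t^k" using pos[of n] by simp
    moreover have "b1 n * t^n \<ge> 0" using pos[of n] t1 by (simp add: b1_def)
    ultimately show "- (real N * (a n * t^k)) \<le> b1 n * t^n - real N * (a n * t^n)"
      by (smt (verit) mult_left_mono of_nat_0_le_iff)
  qed
  also have "(\<Sum>n<N. - (real N * (a n * t^k))) = - (real N * A * t^k)"
    by (simp add: A_def sum_distrib_left sum_distrib_right sum_negf mult.assoc)
  finally have G2: "Gf t \<ge> real N * F - real N * A * t^k" using G1 by linarith
  have "(\<Sum>n\<in>{N}. a n * t^n) \<le> F"
    unfolding F_def psF_def using t1 by (intro sum_le_suminf summ_a) (auto simp: less_imp_le[OF pos])
  hence FN: "a N * t^k * t \<le> F" by (simp add: N_def algebra_simps)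
  have "real N * A / a N \<le> t" by (simp add: t_def)
  hence "real N * A \<le> a N * t" using pos[of N] by (simp add: field_simps)
  hence "real N * A * t^k \<le> a N * t * t^k" using t1 by (intro mult_right_mono) auto
  hence "real N * A * t^k \<le> F" using FN by (simp add: algebra_simps)
  hence "Gf t \<ge> real k * F" using G2 by (simp add: N_def algebra_simps)
  hence "psmean a t \<ge> real k" using Fp by (simp add: mean_eq F_def field_simps)
  thus ?thesis using t1 by (intro exI[of _ t]) auto
qed

lemma ell_ex: "\<exists>t. t \<ge> 0 \<and> psmean a t = real k"
proof -
  obtain T where T: "T \<ge> 0" "psmean a T \<ge> real k" using mean_unbounded by blast
  have "\<exists>x. 0 \<le> x \<and> x \<le> T \<and> psmean a x = real k"
    by (rule IVT') (use T mean_zero continuous_on_subset[OF mean_cont] in auto)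
  thus ?thesis by auto
qed

lemma ell_unique: "t \<ge> 0 \<Longrightarrow> psmean a t = real k \<Longrightarrow> ell a k = t"
  unfolding ell_def
  by (rule the_equality) (auto, metis mean_less_iff not_less_iff_gr_or_eq)

lemma ell_prop: "ell a k \<ge> 0 \<and> psmean a (ell a k) = real k"
  using ell_ex[of k] ell_unique by metis

lemma ell_zero: "ell a 0 = 0" using ell_unique[of 0 0] mean_zero by simp

lemma mean_less_ell: "t \<ge> 0 \<Longrightarrow> psmean a t < real k \<longleftrightarrow> t < ell a k"
  using ell_prop[of k] mean_less_iff[of t "ell a k"] by auto

lemma mean_le_ell: "t \<ge> 0 \<Longrightarrow> psmean a t \<le> real k \<longleftrightarrow> t \<le> ell a k"
  using ell_prop[of k] mean_le_iff[of t "ell a k"] by auto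

lemma ell_le_mean: "t \<ge> 0 \<Longrightarrow> real k \<le> psmean a t \<longleftrightarrow> ell a k \<le> t"
  using ell_prop[of k] mean_le_iff[of "ell a k" t] by auto


lemma tpt0: "tpt a 0 = 0" by (simp add: tpt_def)
lemma tptS: "tpt a (Suc k) = a k / a (Suc k)" by (simp add: tpt_def)

lemma tpt_smono: "strict_mono (tpt a)"
proof (rule strict_mono_Suc_iff[THEN iffD2], intro allI)
  fix n show "tpt a n < tpt a (Suc n)"
  proof (cases n)
    case 0 thus ?thesis using pos[of 0] pos[of 1] by (simp add: tpt_def)
  next
    case (Suc m)
    have p: "a m > 0" "a (Suc m) > 0" "a (Suc (Suc m)) > 0" using pos by auto
    have "a (Suc (Suc m)) / a (Suc m) < a (Suc m) / a m" by (rule ratio_dec)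
    hence "a (Suc (Suc m)) * a m < a (Suc m) * a (Suc m)" using p by (simp add: field_simps)
    hence "a m / a (Suc m) < a (Suc m) / a (Suc (Suc m))" using p by (simp add: field_simps)
    thus ?thesis using Suc by (simp add: tptS)
  qed
qed

lemma tpt_mono_le: "i \<le> j \<Longrightarrow> tpt a i \<le> tpt a j"
  using tpt_smono by (simp add: strict_mono_less_eq)

lemma tpt_mono_less: "i < j \<Longrightarrow> tpt a i < tpt a j"
  using tpt_smono by (simp add: strict_mono_less)

lemma tpt_pos: "k \<ge> 1 \<Longrightarrow> tpt a k > 0"
  using tpt_mono_less[of 0 k] by (simp add: tpt0)

lemma tpt_unbounded: "\<exists>n. t < tpt a n"
proof -
  have "eventually (\<lambda>n. a (Suc n) / a n < 1 / (\<bar>t\<bar> + 1)) sequentially"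
    by (rule order_tendstoD(2)[OF ratio_lim]) (simp add: add_pos_nonneg)
  then obtain n where n: "a (Suc n) / a n < 1 / (\<bar>t\<bar> + 1)" by (auto simp: eventually_sequentially)
  have p: "a n > 0" "a (Suc n) > 0" using pos by auto
  have "a (Suc n) * (\<bar>t\<bar> + 1) < a n" using n p by (simp add: field_simps)
  hence "\<bar>t\<bar> + 1 < a n / a (Suc n)" using p by (simp add: field_simps)
  thus ?thesis by (intro exI[of _ "Suc n"]) (simp add: tptS)
qed

lemma interval_ex: assumes "t \<ge> 0" shows "\<exists>m. tpt a m \<le> t \<and> t < tpt a (Suc m)"
proof -
  obtain n where n: "t < tpt a n" using tpt_unbounded by blast
  define n0 where "n0 = (LEAST n. t < tpt a n)"
  have n0: "t < tpt a n0" unfolding n0_def by (rule LeastI[of "\<lambda>n. t < tpt a n", OF n])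
  have "n0 \<noteq> 0"
  proof
    assume "n0 = 0" thus False using n0 assms by (simp add: tpt0)
  qed
  then obtain m where m: "n0 = Suc m" by (cases n0) auto
  have "\<not> t < tpt a m" using not_less_Least[of m "\<lambda>n. t < tpt a n"] m by (simp add: n0_def)
  thus ?thesis using n0 m by (intro exI[of _ m]) (simp add: not_less)
qed

lemma psf_pos: "t > 0 \<Longrightarrow> psf a j t > 0"
  using F_pos[of t] pos[of j] by (simp add: psf_def)

lemma psf_nonneg: "t \<ge> 0 \<Longrightarrow> psf a j t \<ge> 0"
  using F_pos[of t] pos[of j] by (simp add: psf_def less_imp_le)

lemma psf_zero: "psf a j 0 = (if j = 0 then 1 else 0)"
  using pos[of 0] by (simp add: psf_def F_zero)

lemma psf_Suc_le: assumes "t > 0"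
  shows "psf a (Suc j) t \<le> psf a j t \<longleftrightarrow> t \<le> tpt a (Suc j)"
proof -
  define c where "c = t^j / psF a t"
  have c: "c > 0" using assms F_pos[of t] by (simp add: c_def)
  have "psf a (Suc j) t = (a (Suc j) * t) * c" "psf a j t = a j * c"
    by (simp_all add: psf_def c_def)
  hence "psf a (Suc j) t \<le> psf a j t \<longleftrightarrow> a (Suc j) * t \<le> a j" using c by simp
  also have "\<dots> \<longleftrightarrow> t \<le> a j / a (Suc j)" using pos[of "Suc j"] by (simp add: field_simps)
  finally show ?thesis by (simp add: tptS)
qed

lemma psf_Suc_less: assumes "t > 0"
  shows "psf a (Suc j) t < psf a j t \<longleftrightarrow> t < tpt a (Suc j)"
proof -
  define c where "c = t^j / psF a t"
  have c: "c > 0" using assms F_pos[of t] by (simp add: c_def)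
  have "psf a (Suc j) t = (a (Suc j) * t) * c" "psf a j t = a j * c"
    by (simp_all add: psf_def c_def)
  hence "psf a (Suc j) t < psf a j t \<longleftrightarrow> a (Suc j) * t < a j" using c by simp
  also have "\<dots> \<longleftrightarrow> t < a j / a (Suc j)" using pos[of "Suc j"] by (simp add: field_simps)
  finally show ?thesis by (simp add: tptS)
qed

lemma mode_iff: assumes "t \<ge> 0"
  shows "is_mode (\<lambda>j. psf a j t) k \<longleftrightarrow> tpt a k \<le> t \<and> t \<le> tpt a (Suc k)"
proof (cases "t = 0")
  case True
  have "is_mode (\<lambda>j. psf a j t) k \<longleftrightarrow> k = 0"
    using True by (auto simp: is_mode_def psf_zero dest: spec[of _ 0])
  moreover have "tpt a k \<le> t \<and> t \<le> tpt a (Suc k) \<longleftrightarrow> k = 0"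
    using True tpt_pos[of k] tpt_pos[of "Suc k"] by (cases k) (auto simp: tpt0)
  ultimately show ?thesis by simp
next
  case False
  hence t: "t > 0" using assms by simp
  show ?thesis
  proof
    assume m: "is_mode (\<lambda>j. psf a j t) k"
    have "psf a (Suc k) t \<le> psf a k t" using m by (simp add: is_mode_def)
    hence 1: "t \<le> tpt a (Suc k)" using psf_Suc_le[OF t] by simp
    have 2: "tpt a k \<le> t"
    proof (cases k)
      case 0 thus ?thesis using t by (simp add: tpt0)
    next
      case (Suc p)
      have "psf a p t \<le> psf a (Suc p) t" using m Suc by (simp add: is_mode_def)
      hence "\<not> t < tpt a (Suc p)" using psf_Suc_less[OF t, of p] by linarith
      thus ?thesis using Suc by simp
    qed
    show "tpt a k \<le> t \<and> t \<le> tpt a (Suc k)" using 1 2 by simp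
  next
    assume I: "tpt a k \<le> t \<and> t \<le> tpt a (Suc k)"
    show "is_mode (\<lambda>j. psf a j t) k" unfolding is_mode_def
    proof
      fix j show "psf a j t \<le> psf a k t"
      proof (cases "j \<le> k")
        case True
        show ?thesis using True
        proof (induction rule: dec_induct)
          case (step n)
          have "tpt a (Suc n) \<le> tpt a k" using step by (intro tpt_mono_le) simp
          hence "\<not> t < tpt a (Suc n)" using I by simp
          hence "psf a n t \<le> psf a (Suc n) t" using psf_Suc_less[OF t, of n] by simp
          thus ?case using step by simp
        qed simp
      next
        case False
        hence "k \<le> j" by simp
        thus ?thesis
        proof (induction rule: dec_induct)
          case (step n)
          have "tpt a (Suc k) \<le> tpt a (Suc n)" using step by (intro tpt_mono_le) simp
          hence "psf a (Suc n) t \<le> psf a n t" using psf_Suc_le[OF t, of n] I by simp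
          thus ?case using step by simp
        qed simp
      qed
    qed
  qed
qed

lemma lead_char: assumes "t \<ge> 0"
  shows "((if m = 0 then 0 else psf a (m - 1) t) \<le> psf a m t \<and> psf a m t > psf a (m + 1) t)
    \<longleftrightarrow> tpt a m \<le> t \<and> t < tpt a (Suc m)"
proof (cases "t = 0")
  case True
  have "((if m = 0 then 0 else psf a (m - 1) t) \<le> psf a m t \<and> psf a m t > psf a (m + 1) t) \<longleftrightarrow> m = 0"
    using True by (auto simp: psf_zero)
  moreover have "tpt a m \<le> t \<and> t < tpt a (Suc m) \<longleftrightarrow> m = 0"
    using True tpt_pos[of m] tpt_pos[of "Suc m"] by (cases m) (auto simp: tpt0)
  ultimately show ?thesis by simp
next
  case False
  hence t: "t > 0" using assms by simp
  have A: "psf a m t > psf a (m + 1) t \<longleftrightarrow> t < tpt a (Suc m)" using psf_Suc_less[OF t, of m] by simp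
  have B: "(if m = 0 then 0 else psf a (m - 1) t) \<le> psf a m t \<longleftrightarrow> tpt a m \<le> t"
  proof (cases m)
    case 0 thus ?thesis using t psf_nonneg[of t 0] by (simp add: tpt0)
  next
    case (Suc p)
    thus ?thesis using psf_Suc_less[OF t, of p] by auto
  qed
  show ?thesis using A B by simp
qed

lemma leading_mode_eq: assumes "t \<ge> 0" "tpt a m \<le> t" "t < tpt a (Suc m)"
  shows "leading_mode (\<lambda>j. psf a j t) = m"
  unfolding leading_mode_def
proof (rule the_equality)
  show "(if m = 0 then 0 else psf a (m - 1) t) \<le> psf a m t \<and> psf a m t > psf a (m + 1) t"
    using lead_char[OF assms(1)] assms by simp
next
  fix m' assume "(if m' = 0 then 0 else psf a (m' - 1) t) \<le> psf a m' t \<and> psf a m' t > psf a (m' + 1) t"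
  hence m': "tpt a m' \<le> t" "t < tpt a (Suc m')" using lead_char[OF assms(1)] by auto
  show "m' = m"
  proof (rule ccontr)
    assume "m' \<noteq> m"
    hence "Suc m' \<le> m \<or> Suc m \<le> m'" by auto
    thus False using tpt_mono_le[of "Suc m'" m] tpt_mono_le[of "Suc m" m'] m' assms by auto
  qed
qed

lemma lik_fun: "psf a k = (\<lambda>t. a k * t^k / psF a t)"
  by (auto simp: psf_def)

lemma lik_deriv: assumes "t \<ge> 0"
  shows "(psf a k has_real_derivative
     ((a k * (real k * t^(k-1))) * psF a t - a k * t^k * Fd t) / (psF a t * psF a t)) (at t)"
  unfolding lik_fun using F_pos[OF assms]
  by (intro DERIV_divide DERIV_cmult DERIV_pow F_deriv) auto

lemma lik_cont: "continuous_on {0..} (psf a k)"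
  by (intro continuous_at_imp_continuous_on ballI DERIV_isCont[OF lik_deriv]) auto

lemma lik_sign: assumes "t > 0"
  shows "((a k * (real k * t^(k-1))) * psF a t - a k * t^k * Fd t) / (psF a t * psF a t) > 0
           \<longleftrightarrow> psmean a t < real k"
    and "((a k * (real k * t^(k-1))) * psF a t - a k * t^k * Fd t) / (psF a t * psF a t) < 0
           \<longleftrightarrow> psmean a t > real k"
proof -
  define F where "F = psF a t"
  have Fp: "F > 0" using F_pos assms by (simp add: F_def)
  have kk: "real k * t^(k-1) * t = real k * t^k" by (cases k) auto
  have e1: "t * (a k * (real k * t^(k-1)) * F) = a k * t^k * (real k * F)"
  proof -
    have "t * (a k * (real k * t^(k-1)) * F) = a k * F * (real k * t^(k-1) * t)" by (simp add: ac_simps)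
    also have "\<dots> = a k * F * (real k * t^k)" by (simp only: kk)
    finally show ?thesis by (simp add: ac_simps)
  qed
  have e2: "t * (a k * t^k * Fd t) = a k * t^k * Gf t" by (simp add: G_eq ac_simps)
  have e: "t * ((a k * (real k * t^(k-1))) * F - a k * t^k * Fd t) = (a k * t^k) * (real k * F - Gf t)"
    by (simp only: right_diff_distrib e1 e2)
  have c: "a k * t^k > 0" using pos[of k] assms by simp
  have m: "psmean a t = Gf t / F" by (simp add: mean_eq F_def)
  have "((a k * (real k * t^(k-1))) * F - a k * t^k * Fd t) / (F * F) > 0
     \<longleftrightarrow> t * ((a k * (real k * t^(k-1))) * F - a k * t^k * Fd t) > 0"
    using Fp assms by (simp add: zero_less_mult_iff zero_less_divide_iff)
  also have "\<dots> \<longleftrightarrow> real k * F - Gf t > 0" unfolding e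
    using mult_less_cancel_left_pos[OF c, of 0 "real k * F - Gf t"] by simp
  also have "\<dots> \<longleftrightarrow> psmean a t < real k" using Fp by (simp add: m field_simps)
  finally show "((a k * (real k * t^(k-1))) * psF a t - a k * t^k * Fd t) / (psF a t * psF a t) > 0
           \<longleftrightarrow> psmean a t < real k" by (simp add: F_def)
  have "((a k * (real k * t^(k-1))) * F - a k * t^k * Fd t) / (F * F) < 0
     \<longleftrightarrow> t * ((a k * (real k * t^(k-1))) * F - a k * t^k * Fd t) < 0"
    using Fp assms by (simp add: mult_less_0_iff divide_less_0_iff)
  also have "\<dots> \<longleftrightarrow> real k * F - Gf t < 0" unfolding e
    using mult_less_cancel_left_pos[OF c, of "real k * F - Gf t" 0] by simp
  also have "\<dots> \<longleftrightarrow> psmean a t > real k" using Fp by (simp add: m field_simps)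
  finally show "((a k * (real k * t^(k-1))) * psF a t - a k * t^k * Fd t) / (psF a t * psF a t) < 0
           \<longleftrightarrow> psmean a t > real k" by (simp add: F_def)
qed

lemma lik_inc: assumes "0 \<le> s" "s < t" "t \<le> ell a k" shows "psf a k s < psf a k t"
proof (rule DERIV_pos_imp_increasing_open[OF assms(2)])
  fix x assume x: "s < x" "x < t"
  hence "psmean a x < real k" using assms mean_less_ell[of x k] by auto
  thus "\<exists>y. DERIV (psf a k) x :> y \<and> y > 0" using x assms lik_deriv[of x k] lik_sign(1)[of x k] by auto
next
  show "continuous_on {s..t} (psf a k)"
    by (rule continuous_on_subset[OF lik_cont]) (use assms in auto)
qed

lemma lik_dec: assumes "ell a k \<le> s" "s < t" shows "psf a k s > psf a k t"
proof -
  have s0: "s \<ge> 0" using assms ell_prop[of k] by linarith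
  show ?thesis
  proof (rule DERIV_neg_imp_decreasing_open[OF assms(2)])
    fix x assume x: "s < x" "x < t"
    hence "\<not> psmean a x \<le> real k" using assms s0 mean_le_ell[of x k] by auto
    thus "\<exists>y. DERIV (psf a k) x :> y \<and> y < 0" using x s0 lik_deriv[of x k] lik_sign(2)[of x k] by auto
  next
    show "continuous_on {s..t} (psf a k)"
      by (rule continuous_on_subset[OF lik_cont]) (use s0 in auto)
  qed
qed

lemma lik_max: assumes "t0 \<ge> 0"
  shows "(\<forall>t\<ge>0. psf a k t \<le> psf a k t0) \<longleftrightarrow> t0 = ell a k"
proof
  assume M: "\<forall>t\<ge>0. psf a k t \<le> psf a k t0"
  have e: "ell a k \<ge> 0" using ell_prop by blast
  show "t0 = ell a k"
  proof (rule ccontr)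
    assume "t0 \<noteq> ell a k"
    hence "t0 < ell a k \<or> ell a k < t0" by auto
    thus False using lik_inc[OF assms, of "ell a k" k] lik_dec[of k "ell a k" t0] M e by force
  qed
next
  assume e: "t0 = ell a k"
  show "\<forall>t\<ge>0. psf a k t \<le> psf a k t0"
  proof (intro allI impI)
    fix t :: real assume t: "t \<ge> 0"
    consider "t < t0" | "t = t0" | "t > t0" by fastforce
    thus "psf a k t \<le> psf a k t0"
      by cases (use lik_inc[OF t, of t0 k] lik_dec[of k t0 t] e in auto)
  qed
qed


lemma tpt_nonneg: "tpt a k \<ge> 0"
  using tpt_mono_le[of 0 k] by (simp add: tpt0)

lemma C_iff_ell: "(\<forall>t\<ge>0. \<forall>k::nat. psmean a t = real k \<longrightarrow> is_mode (\<lambda>j. psf a j t) k)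
   \<longleftrightarrow> (\<forall>k. is_mode (\<lambda>j. psf a j (ell a k)) k)"
  using ell_prop ell_unique by metis

lemma CM_iff: "cross_modal a \<longleftrightarrow> (\<forall>k. is_mode (\<lambda>j. psf a j (ell a k)) k)"
  unfolding cross_modal_def
proof (intro iffI allI)
  fix k
  assume H: "\<forall>k. (\<exists>t0\<ge>0. \<forall>t\<ge>0. psf a k t \<le> psf a k t0) \<and>
          (\<forall>t0\<ge>0. (\<forall>t\<ge>0. psf a k t \<le> psf a k t0) \<longrightarrow> is_mode (\<lambda>j. psf a j t0) k)"
  have e: "ell a k \<ge> 0" using ell_prop by blast
  have "\<forall>t\<ge>0. psf a k t \<le> psf a k (ell a k)" using lik_max[OF e] by simp
  thus "is_mode (\<lambda>j. psf a j (ell a k)) k" using H e by blast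
next
  fix k
  assume H: "\<forall>k. is_mode (\<lambda>j. psf a j (ell a k)) k"
  have e: "ell a k \<ge> 0" using ell_prop by blast
  show "(\<exists>t0\<ge>0. \<forall>t\<ge>0. psf a k t \<le> psf a k t0) \<and>
          (\<forall>t0\<ge>0. (\<forall>t\<ge>0. psf a k t \<le> psf a k t0) \<longrightarrow> is_mode (\<lambda>j. psf a j t0) k)"
    using lik_max[of _ k] lik_max[OF e, of k] e H by blast
qed

lemma modes_iff_I: "(\<forall>k. is_mode (\<lambda>j. psf a j (ell a k)) k)
   \<longleftrightarrow> (\<forall>k\<ge>1. tpt a k \<le> ell a k \<and> ell a k \<le> tpt a (k + 1))"
proof -
  have "is_mode (\<lambda>j. psf a j (ell a k)) k \<longleftrightarrow> tpt a k \<le> ell a k \<and> ell a k \<le> tpt a (k + 1)" for k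
    using mode_iff[of "ell a k" k] ell_prop[of k] by simp
  moreover have "tpt a 0 \<le> ell a 0 \<and> ell a 0 \<le> tpt a (0 + 1)"
    using tpt_nonneg by (simp add: ell_zero tpt0)
  ultimately show ?thesis by (metis less_one not_le)
qed

lemma I_iff_II: "(\<forall>k\<ge>1. tpt a k \<le> ell a k \<and> ell a k \<le> tpt a (k + 1))
  \<longleftrightarrow> (\<forall>k\<ge>1. real k - 1 \<le> psmean a (tpt a k) \<and> psmean a (tpt a k) \<le> real k)"
proof -
  have A: "tpt a k \<le> ell a k \<longleftrightarrow> psmean a (tpt a k) \<le> real k" for k
    using mean_le_ell[OF tpt_nonneg] by simp
  have B: "ell a k \<le> tpt a (k + 1) \<longleftrightarrow> real k \<le> psmean a (tpt a (k + 1))" for k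
    using ell_le_mean[OF tpt_nonneg] by simp
  show ?thesis
  proof (intro iffI allI impI conjI)
    fix k :: nat assume I: "\<forall>k\<ge>1. tpt a k \<le> ell a k \<and> ell a k \<le> tpt a (k + 1)" and k: "k \<ge> 1"
    show "psmean a (tpt a k) \<le> real k" using I k A by blast
    show "real k - 1 \<le> psmean a (tpt a k)"
    proof (cases "k = 1")
      case True thus ?thesis using mean_nonneg[OF tpt_nonneg] by simp
    next
      case False
      obtain j where "k = Suc j" using k by (cases k) auto
      hence j: "k = j + 1" "j \<ge> 1" using False by auto
      hence "real j \<le> psmean a (tpt a (j + 1))" using I B by blast
      thus ?thesis using j by simp
    qed
  next
    fix k :: nat assume II: "\<forall>k\<ge>1. real k - 1 \<le> psmean a (tpt a k) \<and> psmean a (tpt a k) \<le> real k"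
      and k: "k \<ge> 1"
    show "tpt a k \<le> ell a k" using II k A by blast
    have "real (k + 1) - 1 \<le> psmean a (tpt a (k + 1))" using II[rule_format, of "k + 1"] by simp
    thus "ell a k \<le> tpt a (k + 1)" using B by simp
  qed
qed

lemma II_iff_III: "(\<forall>k\<ge>1. real k - 1 \<le> psmean a (tpt a k) \<and> psmean a (tpt a k) \<le> real k)
  \<longleftrightarrow> (SUP t\<in>{0..}. ereal \<bar>psmean a t - real (leading_mode (\<lambda>j. psf a j t))\<bar>) \<le> 1"
proof
  assume II: "\<forall>k\<ge>1. real k - 1 \<le> psmean a (tpt a k) \<and> psmean a (tpt a k) \<le> real k"
  show "(SUP t\<in>{0..}. ereal \<bar>psmean a t - real (leading_mode (\<lambda>j. psf a j t))\<bar>) \<le> 1"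
  proof (rule SUP_least)
    fix t :: real assume "t \<in> {0..}"
    hence t: "t \<ge> 0" by simp
    obtain m where m: "tpt a m \<le> t" "t < tpt a (Suc m)" using interval_ex[OF t] by blast
    have lm: "leading_mode (\<lambda>j. psf a j t) = m" by (rule leading_mode_eq[OF t m])
    have "psmean a t \<le> psmean a (tpt a (Suc m))" using m t tpt_nonneg mean_le_iff by simp
    also have "\<dots> \<le> real (Suc m)" using II[rule_format, of "Suc m"] by simp
    finally have up: "psmean a t \<le> real m + 1" by simp
    have lo: "psmean a t \<ge> real m - 1"
    proof (cases "m = 0")
      case True thus ?thesis using mean_nonneg[OF t] by simp
    next
      case False
      have "real m - 1 \<le> psmean a (tpt a m)" using II False by simp
      also have "\<dots> \<le> psmean a t" using m t tpt_nonneg mean_le_iff by simp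
      finally show ?thesis .
    qed
    have "\<bar>psmean a t - real m\<bar> \<le> 1" using up lo by linarith
    thus "ereal \<bar>psmean a t - real (leading_mode (\<lambda>j. psf a j t))\<bar> \<le> 1" using lm by simp
  qed
next
  assume S: "(SUP t\<in>{0..}. ereal \<bar>psmean a t - real (leading_mode (\<lambda>j. psf a j t))\<bar>) \<le> 1"
  have Bd: "\<bar>psmean a t - real (leading_mode (\<lambda>j. psf a j t))\<bar> \<le> 1" if t: "t \<ge> 0" for t
  proof -
    have "ereal \<bar>psmean a t - real (leading_mode (\<lambda>j. psf a j t))\<bar>
       \<le> (SUP t\<in>{0..}. ereal \<bar>psmean a t - real (leading_mode (\<lambda>j. psf a j t))\<bar>)"
      by (rule SUP_upper) (use t in simp)
    also have "\<dots> \<le> 1" by (rule S)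
    finally show ?thesis by simp
  qed
  have BL: "\<bar>psmean a t - real m\<bar> \<le> 1" if "t \<ge> 0" "tpt a m \<le> t" "t < tpt a (Suc m)" for t m
    using Bd[OF that(1)] leading_mode_eq[OF that] by simp
  show "\<forall>k\<ge>1. real k - 1 \<le> psmean a (tpt a k) \<and> psmean a (tpt a k) \<le> real k"
  proof (intro allI impI conjI)
    fix k :: nat assume k: "k \<ge> 1"
    have "\<bar>psmean a (tpt a k) - real k\<bar> \<le> 1"
      using BL[OF tpt_nonneg order_refl tpt_mono_less[of k "Suc k"]] by simp
    thus "real k - 1 \<le> psmean a (tpt a k)" by linarith
    show "psmean a (tpt a k) \<le> real k"
    proof (rule ccontr)
      assume c: "\<not> psmean a (tpt a k) \<le> real k"
      hence lt: "ell a k < tpt a k" using mean_le_ell[OF tpt_nonneg] by simp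
      obtain p where p: "k = Suc p" using k by (cases k) auto
      show False
      proof (cases "ell a k < tpt a p")
        case True
        hence "\<not> psmean a (tpt a p) \<le> real k" using mean_le_ell[OF tpt_nonneg] by simp
        moreover have "\<bar>psmean a (tpt a p) - real p\<bar> \<le> 1"
          using BL[OF tpt_nonneg order_refl tpt_mono_less[of p "Suc p"]] by simp
        ultimately show False using p by simp
      next
        case False
        define s where "s = (ell a k + tpt a k) / 2"
        have s1: "tpt a p \<le> s" "s < tpt a (Suc p)" "ell a k < s" using False lt p by (auto simp: s_def)
        have s0: "s \<ge> 0" using s1 tpt_nonneg[of p] by linarith
        have "\<not> psmean a s \<le> real k" using mean_le_ell[OF s0] s1 by simp
        moreover have "\<bar>psmean a s - real p\<bar> \<le> 1" using BL[OF s0 s1(1,2)] .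
        ultimately show False using p by simp
      qed
    qed
  qed
qed

end

theorem proposition1:
  fixes a :: "nat \<Rightarrow> real"
  assumes pos: "\<And>k. a k > 0"
    and ratio_dec: "\<And>k. a (Suc (Suc k)) / a (Suc k) < a (Suc k) / a k"
    and ratio_lim: "(\<lambda>k. a (Suc k) / a k) \<longlonglongrightarrow> 0"
  defines "C \<equiv> (\<forall>t\<ge>0. \<forall>k::nat. psmean a t = real k \<longrightarrow> is_mode (\<lambda>j. psf a j t) k)"
  shows "(cross_modal a \<longleftrightarrow> C)
    \<and> (C \<longleftrightarrow> (\<forall>k\<ge>1. tpt a k \<le> ell a k \<and> ell a k \<le> tpt a (k + 1)))
    \<and> (C \<longleftrightarrow> (\<forall>k\<ge>1. real k - 1 \<le> psmean a (tpt a k) \<and> psmean a (tpt a k) \<le> real k))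
    \<and> (C \<longleftrightarrow> (SUP t\<in>{0..}. ereal \<bar>psmean a t - real (leading_mode (\<lambda>j. psf a j t))\<bar>) \<le> 1)"
proof -
  interpret psd a using pos ratio_dec ratio_lim by unfold_locales auto
  have C: "C \<longleftrightarrow> (\<forall>k. is_mode (\<lambda>j. psf a j (ell a k)) k)" unfolding C_def by (rule C_iff_ell)
  show ?thesis using C CM_iff modes_iff_I I_iff_II II_iff_III by blast
qed

end
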